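(* In the linear model setting described in the context, for every $\alpha\in[0,1]$, $$\mathcal R(\hat f_\alpha)\le\sum_{s=1}^Kw_s\mathbb E\big(\langle\boldsymbol X,\boldsymbol\beta^*-\hat{\boldsymbol\beta}\rangle+(b^*_s-\hat b_s)\big)^2+2(1-\sqrt\alpha)\sqrt{\sum_{s=1}^Kw_s(b^*_s-\hat b_s)^2}\sqrt{\sum_{s=1}^Kw_s\Big(\hat b_s-\sum_{s'}w_{s'}\hat b_{s'}\Big)^2}+(1-\sqrt\alpha)^2\sum_{s=1}^Kw_s\Big(\hat b_s-\sum_{s'}w_{s'}\hat b_{s'}\Big)^2.$$
   Context: Model: $Y=\langle\boldsymbol X,\boldsymbol\beta^*\rangle+b^*_S+\xi$, $\boldsymbol X\sim\mathcal N(\boldsymbol0,\boldsymbol\Sigma)$ with $\boldsymbol\Sigma\succ0$, independent of $S\in[K]$, $\xi\sim\mathcal N(0,\sigma^2)$ independent. Observations: for each $s$, $\boldsymbol Y_s=\mathbf X_s\boldsymbol\beta^*+b^*_s\boldsymbol1_{n_s}+\boldsymbol\xi_s$ (i.i.d. $\mathcal N(\boldsymbol0,\boldsymbol\Sigma)$ rows, i.i.d. $\mathcal N(0,\sigma^2)$ noise, all independent); $n=\sum_sn_s$, $w_s=n_s/n$. $(\hat{\boldsymbol\beta},\hat{\boldsymbol b})\in\arg\min_{(\boldsymbol\beta,\boldsymbol b)}\sum_sw_s\frac1{n_s}\|\boldsymbol Y_s-\mathbf X_s\boldsymbol\beta-b_s\boldsymbol1_{n_s}\|_2^2$; $\hat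 f_\alpha(\boldsymbol x,s)=\langle\boldsymbol x,\hat{\boldsymbol\beta}\rangle+\sqrt\alpha\hat b_s+(1-\sqrt\alpha)\sum_{s'}w_{s'}\hat b_{s'}$. Risk (sample fixed): $\mathcal R(f)=\sum_sw_s\mathbb E(\langle\boldsymbol X,\boldsymbol\beta^*\rangle+b^*_s-f(\boldsymbol X,s))^2$ where $\mathbb E$ is over $\boldsymbol X\sim\mathcal N(\boldsymbol0,\boldsymbol\Sigma)$ independent of the sample. *)

theory Defs
  imports "HOL-Probability.Probability"
begin

text \<open>Centered multivariate Gaussian law on real^'d with covariance matrix Sigma,
  in the Cramer--Wold sense: every non-trivial linear functional u . X is
  distributed as N(0, u^T Sigma u).\<close>

definition centered_gaussian :: "(real^'d) measure \<Rightarrow> real^'d^'d \<Rightarrow> bool" where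
  "centered_gaussian M Sig \<longleftrightarrow>
     prob_space M \<and> sets M = sets borel \<and>
     (\<forall>u::real^'d. u \<noteq> 0 \<longrightarrow>
        distr M borel (\<lambda>x. u \<bullet> x) = density lborel (normal_density 0 (sqrt (u \<bullet> (Sig *v u)))))"

definition pos_def_mat :: "real^'d^'d \<Rightarrow> bool" where
  "pos_def_mat Sig \<longleftrightarrow> transpose Sig = Sig \<and> (\<forall>u::real^'d. u \<noteq> 0 \<longrightarrow> u \<bullet> (Sig *v u) > 0)"

text \<open>Groups are s = 1..K; group s has n s observations (xs s i, ys s i), i < n s.\<close>
definition weight :: "nat \<Rightarrow> (nat \<Rightarrow> nat) \<Rightarrow> nat \<Rightarrow> real" where
  "weight K n s = real (n s) / real (\<Sum>s'\<in>{1..K}. n s')"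

definition emp_obj :: "nat \<Rightarrow> (nat \<Rightarrow> nat) \<Rightarrow> (nat \<Rightarrow> nat \<Rightarrow> real^'d) \<Rightarrow> (nat \<Rightarrow> nat \<Rightarrow> real)
                       \<Rightarrow> real^'d \<Rightarrow> (nat \<Rightarrow> real) \<Rightarrow> real" where
  "emp_obj K n xs ys \<beta> b =
     (\<Sum>s\<in>{1..K}. weight K n s * (1 / real (n s)) *
        (\<Sum>i<n s. (ys s i - xs s i \<bullet> \<beta> - b s)\<^sup>2))"

definition f_alpha :: "nat \<Rightarrow> (nat \<Rightarrow> nat) \<Rightarrow> real \<Rightarrow> real^'d \<Rightarrow> (nat \<Rightarrow> real) \<Rightarrow> real^'d \<Rightarrow> nat \<Rightarrow> real" where
  "f_alpha K n \<alpha> \<beta>h bh x s =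
     x \<bullet> \<beta>h + sqrt \<alpha> * bh s + (1 - sqrt \<alpha>) * (\<Sum>s'\<in>{1..K}. weight K n s' * bh s')"

definition risk :: "(real^'d) measure \<Rightarrow> nat \<Rightarrow> (nat \<Rightarrow> nat) \<Rightarrow> real^'d \<Rightarrow> (nat \<Rightarrow> real)
                    \<Rightarrow> (real^'d \<Rightarrow> nat \<Rightarrow> real) \<Rightarrow> real" where
  "risk M K n \<beta>s bs f =
     (\<Sum>s\<in>{1..K}. weight K n s * (\<integral>x. (x \<bullet> \<beta>s + bs s - f x s)\<^sup>2 \<partial>M))"

end

theory Submission
  imports Defs "HOL-Analysis.Analysis"
begin

lemma gauss_facts:
  fixes M :: "(real^'d) measure" and Sig :: "real^'d^'d" and \<delta> :: "real^'d"
  assumes pd: "pos_def_mat Sig" and cg: "centered_gaussian M Sig"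
  shows "integrable M (\<lambda>x. x \<bullet> \<delta>) \<and> (\<integral>x. x \<bullet> \<delta> \<partial>M) = 0 \<and> integrable M (\<lambda>x. (x \<bullet> \<delta>)\<^sup>2)"
proof (cases "\<delta> = 0")
  case True
  then show ?thesis by simp
next
  case False
  have ps: "prob_space M" and sM: "sets M = sets borel" using cg unfolding centered_gaussian_def by auto
  interpret prob_space M by (fact ps)
  define \<sigma> where "\<sigma> = sqrt (\<delta> \<bullet> (Sig *v \<delta>))"
  have sp: "\<sigma> > 0" using pd False unfolding pos_def_mat_def \<sigma>_def by auto
  have dd: "distr M borel (\<lambda>x. \<delta> \<bullet> x) = density lborel (normal_density 0 \<sigma>)"
    using cg False unfolding centered_gaussian_def \<sigma>_def by auto
  have meas: "(\<lambda>x. x \<bullet> \<delta>) \<in> borel_measurable M"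
  proof -
    have "(\<lambda>x::real^'d. x \<bullet> \<delta>) \<in> borel_measurable borel"
      by (intro borel_measurable_continuous_onI continuous_intros)
    then show ?thesis unfolding measurable_cong_sets[OF sM refl] .
  qed
  have "distr M lborel (\<lambda>x. x \<bullet> \<delta>) = distr M borel (\<lambda>x. \<delta> \<bullet> x)"
    by (rule distr_cong) (auto simp: inner_commute)
  then have D: "distributed M lborel (\<lambda>x. x \<bullet> \<delta>) (normal_density 0 \<sigma>)"
    unfolding distributed_def using dd meas by simp
  have i1: "integrable M (\<lambda>x. x \<bullet> \<delta>)"
    using distributed_integrable[OF D, of "\<lambda>x. x"] integrable_normal_moment_nz_1[OF sp, of 0]
    by (simp add: normal_density_nonneg)
  have e: "(\<integral>x. x \<bullet> \<delta> \<partial>M) = 0"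
    using normal_distributed_expectation[OF sp D] by simp
  have i2: "integrable M (\<lambda>x. (x \<bullet> \<delta>)\<^sup>2)"
    using distributed_integrable[OF D, of "\<lambda>x. x\<^sup>2"] integrable_normal_moment[OF sp, of 0 2]
    by (simp add: normal_density_nonneg)
  show ?thesis using i1 e i2 by simp
qed

lemma shift_int:
  fixes M :: "(real^'d) measure" and Sig :: "real^'d^'d" and \<delta> :: "real^'d"
  assumes pd: "pos_def_mat Sig" and cg: "centered_gaussian M Sig"
  shows "(\<integral>x. (x \<bullet> \<delta> + a)\<^sup>2 \<partial>M) = (\<integral>x. (x \<bullet> \<delta>)\<^sup>2 \<partial>M) + a\<^sup>2"
proof -
  have ps: "prob_space M" using cg unfolding centered_gaussian_def by auto
  interpret prob_space M by (fact ps)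
  note g = gauss_facts[OF pd cg, of \<delta>]
  have eq: "(\<lambda>x. (x \<bullet> \<delta> + a)\<^sup>2) = (\<lambda>x. ((x \<bullet> \<delta>)\<^sup>2 + (2 * a) * (x \<bullet> \<delta>)) + a\<^sup>2)"
    by (auto simp: power2_eq_square algebra_simps)
  have "(\<integral>x. ((x \<bullet> \<delta>)\<^sup>2 + (2 * a) * (x \<bullet> \<delta>)) + a\<^sup>2 \<partial>M)
      = (\<integral>x. ((x \<bullet> \<delta>)\<^sup>2 + (2 * a) * (x \<bullet> \<delta>)) \<partial>M) + (\<integral>x. a\<^sup>2 \<partial>M)"
    using g by (intro Bochner_Integration.integral_add) auto
  also have "(\<integral>x. ((x \<bullet> \<delta>)\<^sup>2 + (2 * a) * (x \<bullet> \<delta>)) \<partial>M)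
      = (\<integral>x. (x \<bullet> \<delta>)\<^sup>2 \<partial>M) + (\<integral>x. (2 * a) * (x \<bullet> \<delta>) \<partial>M)"
    using g by (intro Bochner_Integration.integral_add) auto
  also have "(\<integral>x. (2 * a) * (x \<bullet> \<delta>) \<partial>M) = 0" using g by simp
  also have "(\<integral>x. a\<^sup>2 \<partial>M) = a\<^sup>2" by (simp add: prob_space)
  finally show ?thesis unfolding eq by simp
qed

lemma wcs:
  fixes w e d :: "nat \<Rightarrow> real"
  assumes "\<And>s. s \<in> A \<Longrightarrow> w s \<ge> 0"
  shows "(\<Sum>s\<in>A. w s * e s * d s) \<le> sqrt (\<Sum>s\<in>A. w s * (e s)\<^sup>2) * sqrt (\<Sum>s\<in>A. w s * (d s)\<^sup>2)"
proof -
  have "(\<Sum>s\<in>A. (sqrt (w s) * e s) * (sqrt (w s) * d s))\<^sup>2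
     \<le> (\<Sum>s\<in>A. (sqrt (w s) * e s)\<^sup>2) * (\<Sum>s\<in>A. (sqrt (w s) * d s)\<^sup>2)"
    by (rule Cauchy_Schwarz_ineq_sum)
  moreover have "(\<Sum>s\<in>A. (sqrt (w s) * e s) * (sqrt (w s) * d s)) = (\<Sum>s\<in>A. w s * e s * d s)"
    using assms by (intro sum.cong) (auto simp: algebra_simps)
  moreover have "(\<Sum>s\<in>A. (sqrt (w s) * e s)\<^sup>2) = (\<Sum>s\<in>A. w s * (e s)\<^sup>2)"
    using assms by (intro sum.cong) (auto simp: power_mult_distrib)
  moreover have "(\<Sum>s\<in>A. (sqrt (w s) * d s)\<^sup>2) = (\<Sum>s\<in>A. w s * (d s)\<^sup>2)"
    using assms by (intro sum.cong) (auto simp: power_mult_distrib)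
  ultimately have "(\<Sum>s\<in>A. w s * e s * d s)\<^sup>2 \<le> (\<Sum>s\<in>A. w s * (e s)\<^sup>2) * (\<Sum>s\<in>A. w s * (d s)\<^sup>2)" by simp
  then have "sqrt ((\<Sum>s\<in>A. w s * e s * d s)\<^sup>2) \<le> sqrt ((\<Sum>s\<in>A. w s * (e s)\<^sup>2) * (\<Sum>s\<in>A. w s * (d s)\<^sup>2))"
    using real_sqrt_le_mono by blast
  then show ?thesis by (simp add: real_sqrt_mult)
qed

theorem lemma15:
  fixes M :: "(real^'d) measure" and Sig :: "real^'d^'d"
    and K :: nat and n :: "nat \<Rightarrow> nat"
    and xs :: "nat \<Rightarrow> nat \<Rightarrow> real^'d" and ys :: "nat \<Rightarrow> nat \<Rightarrow> real"
    and \<beta>s \<beta>h :: "real^'d" and bs bh :: "nat \<Rightarrow> real" and \<alpha> :: real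
  assumes "pos_def_mat Sig"
    and "centered_gaussian M Sig"
    and "K \<ge> 1"
    and "\<forall>s\<in>{1..K}. n s \<ge> 1"
    and "\<forall>\<beta> b. emp_obj K n xs ys \<beta>h bh \<le> emp_obj K n xs ys \<beta> b"
    and "0 \<le> \<alpha>" and "\<alpha> \<le> 1"
  shows "risk M K n \<beta>s bs (f_alpha K n \<alpha> \<beta>h bh)
    \<le> (\<Sum>s\<in>{1..K}. weight K n s * (\<integral>x. (x \<bullet> (\<beta>s - \<beta>h) + (bs s - bh s))\<^sup>2 \<partial>M))
      + 2 * (1 - sqrt \<alpha>) * sqrt (\<Sum>s\<in>{1..K}. weight K n s * (bs s - bh s)\<^sup>2)
          * sqrt (\<Sum>s\<in>{1..K}. weight K n s * (bh s - (\<Sum>s'\<in>{1..K}. weight K n s' * bh s'))\<^sup>2)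
      + (1 - sqrt \<alpha>)\<^sup>2 * (\<Sum>s\<in>{1..K}. weight K n s * (bh s - (\<Sum>s'\<in>{1..K}. weight K n s' * bh s'))\<^sup>2)"
proof -
  define w where "w = weight K n"
  define m where "m = (\<Sum>s'\<in>{1..K}. w s' * bh s')"
  define c where "c = 1 - sqrt \<alpha>"
  define \<delta> where "\<delta> = \<beta>s - \<beta>h"
  define I where "I = (\<integral>x. (x \<bullet> \<delta>)\<^sup>2 \<partial>M)"
  have c0: "c \<ge> 0" unfolding c_def using assms(6,7) by simp
  have w0: "\<And>s. w s \<ge> 0" unfolding w_def weight_def by (intro divide_nonneg_nonneg sum_nonneg) (auto simp: sum_nonneg)
  have L: "risk M K n \<beta>s bs (f_alpha K n \<alpha> \<beta>h bh)
     = (\<Sum>s\<in>{1..K}. w s * (I + (bs s - bh s + c * (bh s - m))\<^sup>2))"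
    unfolding risk_def
  proof (intro sum.cong refl)
    fix s
    have "(\<lambda>x. (x \<bullet> \<beta>s + bs s - f_alpha K n \<alpha> \<beta>h bh x s)\<^sup>2)
        = (\<lambda>x. (x \<bullet> \<delta> + (bs s - bh s + c * (bh s - m)))\<^sup>2)"
      unfolding f_alpha_def \<delta>_def c_def m_def w_def by (auto simp: inner_diff_right algebra_simps)
    then show "weight K n s * (\<integral>x. (x \<bullet> \<beta>s + bs s - f_alpha K n \<alpha> \<beta>h bh x s)\<^sup>2 \<partial>M)
        = w s * (I + (bs s - bh s + c * (bh s - m))\<^sup>2)"
      using shift_int[OF assms(1,2)] unfolding w_def I_def by simp
  qed
  have R1: "(\<Sum>s\<in>{1..K}. weight K n s * (\<integral>x. (x \<bullet> (\<beta>s - \<beta>h) + (bs s - bh s))\<^sup>2 \<partial>M))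
     = (\<Sum>s\<in>{1..K}. w s * (I + (bs s - bh s)\<^sup>2))"
    using shift_int[OF assms(1,2)] unfolding w_def I_def \<delta>_def by simp
  have split: "(\<Sum>s\<in>{1..K}. w s * (I + (bs s - bh s + c * (bh s - m))\<^sup>2))
     = (\<Sum>s\<in>{1..K}. w s * (I + (bs s - bh s)\<^sup>2)) + 2 * c * (\<Sum>s\<in>{1..K}. w s * (bs s - bh s) * (bh s - m))
       + c\<^sup>2 * (\<Sum>s\<in>{1..K}. w s * (bh s - m)\<^sup>2)"
    by (simp add: sum_distrib_left sum.distrib[symmetric] power2_eq_square algebra_simps)
  have cs: "(\<Sum>s\<in>{1..K}. w s * (bs s - bh s) * (bh s - m))
     \<le> sqrt (\<Sum>s\<in>{1..K}. w s * (bs s - bh s)\<^sup>2) * sqrt (\<Sum>s\<in>{1..K}. w s * (bh s - m)\<^sup>2)"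
    by (rule wcs) (use w0 in auto)
  have "2 * c * (\<Sum>s\<in>{1..K}. w s * (bs s - bh s) * (bh s - m))
     \<le> 2 * c * (sqrt (\<Sum>s\<in>{1..K}. w s * (bs s - bh s)\<^sup>2) * sqrt (\<Sum>s\<in>{1..K}. w s * (bh s - m)\<^sup>2))"
    using cs c0 by (simp add: mult_left_mono)
  then show ?thesis unfolding L R1 split
    unfolding w_def[symmetric] m_def[symmetric] c_def[symmetric] by (simp add: mult.assoc)
qed

end
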